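(* For all positive integers $n\geq 2$ and $t$, the set $D_{n,t}$ is a dominating set of $S(K_n,t)$.
   Context: For a positive integer $n$ let $[n]=\{1,\dots,n\}$. For positive integers $n,t$, the Sierpiński graph $S(K_n,t)$ is the simple graph with vertex set $[n]^t$ (words $v_1v_2\cdots v_t$ with $v_i\in[n]$), in which $u_1\cdots u_t$ and $v_1\cdots v_t$ are adjacent if and only if there is $s\in[t]$ with $u_j=v_j$ for all $j<s$, $u_s\neq v_s$, and $u_j=v_s$ and $v_j=u_s$ for all $j>s$. A set of vertices is dominating if every vertex lies in it or is adjacent to one of its elements. Write $a^k$ for the word consisting of $k$ copies of the letter $a$. The sets $D_{n,t}\subseteq[n]^t$ are defined recursively: $D_{n,1}=\{1\}$, $D_{n,2}=\{11,21,\dots,n1\}$. For $t\geq 3$ and $\mathbf v=v_1\cdots v_{t-2}\in D_{n,t-2}$ put $E_1(\mathbf v)=\{v_1\cdots v_{t-2}\alpha\alpha:\alpha\in[n]\}$, $E_2(\mathbf v)=\{v_1\cdots v_{t-3}\alpha\beta v_{t-2}:\alpha,\beta\in[n]\setminus\{v_{t-2}\}\}$, and, if $\mathbf v$ is not a constant word, let $\ell$ be the largest index in $[t-3]$ with $v_\ell\neq v_{\ell+1}$ and put $E_3(\mathbf v)=\{v_1\cdots v_{\ell-1}v_{\ell+1}v_\ell^{\,t-\ell-2}\alpha v_\ell:\alpha\in[n]\setminus\{v_\ell\}\}$. If $t\geq 3$ is odd, $D_{n,t}=E_1(1^{t-2})\cup E_2(1^{t-2})\cup\bigcup_{\mathbf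 v\in D_{n,t-2}\setminus\{1^{t-2}\}}\big(E_1(\mathbf v)\cup E_2(\mathbf v)\cup E_3(\mathbf v)\big)$. If $t\geq 4$ is even, $D_{n,t}=\{1^{t-2}\alpha1:\alpha\in[n]\}\cup\bigcup_{\mathbf v\in D_{n,t-2}\setminus\{1^{t-2}\}}\big(E_1(\mathbf v)\cup E_2(\mathbf v)\cup E_3(\mathbf v)\big)$. (In this recursion $1^{t-2}\in D_{n,t-2}$ is the only constant word in $D_{n,t-2}$, so $E_3$ is applied only to non-constant words.) *)

theory Defs
  imports Main
begin

(* Words over [n] are lists; positions are 0-indexed in the formalization
   (paper position i corresponds to list index i-1). *)

definition sierp_vertices :: "nat \<Rightarrow> nat \<Rightarrow> nat list set" where
  "sierp_vertices n t = {w. length w = t \<and> set w \<subseteq> {1..n}}"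

definition sierp_adj :: "nat list \<Rightarrow> nat list \<Rightarrow> bool" where
  "sierp_adj u v \<longleftrightarrow> length u = length v \<and>
     (\<exists>s < length u. (\<forall>j < s. u ! j = v ! j) \<and> u ! s \<noteq> v ! s \<and>
        (\<forall>j. s < j \<and> j < length u \<longrightarrow> u ! j = v ! s \<and> v ! j = u ! s))"

definition sierp_dominating :: "nat \<Rightarrow> nat \<Rightarrow> nat list set \<Rightarrow> bool" where
  "sierp_dominating n t D \<longleftrightarrow> D \<subseteq> sierp_vertices n t \<and>
     (\<forall>v \<in> sierp_vertices n t. v \<in> D \<or> (\<exists>u \<in> D. sierp_adj u v))"

definition E1 :: "nat \<Rightarrow> nat list \<Rightarrow> nat list set" where
  "E1 n v = {v @ [a, a] | a. a \<in> {1..n}}"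

definition E2 :: "nat \<Rightarrow> nat list \<Rightarrow> nat list set" where
  "E2 n v = {butlast v @ [a, b, last v] | a b.
               a \<in> {1..n} - {last v} \<and> b \<in> {1..n} - {last v}}"

definition lidx :: "nat list \<Rightarrow> nat" where
  "lidx v = (GREATEST i. i + 1 < length v \<and> v ! i \<noteq> v ! (i + 1))"

(* v_1..v_{l-1} v_{l+1} v_l^{t-l-2} a v_l  with t = length v + 2 *)
definition E3 :: "nat \<Rightarrow> nat list \<Rightarrow> nat list set" where
  "E3 n v = (let l = lidx v in
     {take l v @ [v ! (l + 1)] @ replicate (length v - l - 1) (v ! l) @ [a, v ! l] | a.
        a \<in> {1..n} - {v ! l}})"

fun Dset :: "nat \<Rightarrow> nat \<Rightarrow> nat list set" where
  "Dset n 0 = {}"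
| "Dset n (Suc 0) = {[1]}"
| "Dset n (Suc (Suc 0)) = {[a, 1] | a. a \<in> {1..n}}"
| "Dset n (Suc (Suc (Suc k))) =
     (let t = k + 3; one = replicate (Suc k) (1::nat);
          rest = (\<Union>v \<in> Dset n (Suc k) - {one}. E1 n v \<union> E2 n v \<union> E3 n v)
      in if odd t then E1 n one \<union> E2 n one \<union> rest
         else {replicate (Suc k) 1 @ [a, 1] | a. a \<in> {1..n}} \<union> rest)"

end

theory Submission
  imports Defs
begin

lemma adj_last: "c \<noteq> e \<Longrightarrow> sierp_adj (q@[c]) (q@[e])"
  unfolding sierp_adj_def
  by (rule conjI, simp, rule exI[of _ "length q"]) (auto simp: nth_append)

lemma adj_ext: "c \<noteq> d \<Longrightarrow> sierp_adj (r@[c]@replicate m d) (r@[d]@replicate m c)"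
  unfolding sierp_adj_def
  apply (rule conjI, simp, rule exI[of _ "length r"])
  apply (auto simp: nth_append nth_Cons split: nat.split)
  done

lemma adj_sym: "sierp_adj u v \<Longrightarrow> sierp_adj v u"
  unfolding sierp_adj_def by (metis)

lemma adj_cases:
  assumes "sierp_adj v p"
  shows "(\<exists>q c e. p = q@[c] \<and> v = q@[e] \<and> c\<noteq>e) \<or>
         (\<exists>r c d m. m\<ge>1 \<and> c\<noteq>d \<and> p = r@[c]@replicate m d \<and> v = r@[d]@replicate m c)"
proof -
  from assms obtain s where L: "length v = length p" and s: "s < length v"
    and pre: "\<forall>j<s. v!j = p!j" and ne: "v!s \<noteq> p!s"
    and post: "\<forall>j. s<j \<and> j<length v \<longrightarrow> v!j = p!s \<and> p!j = v!s"
    unfolding sierp_adj_def by blast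
  have tk: "take s v = take s p"
  proof (rule nth_equalityI)
    show "length (take s v) = length (take s p)" using L by simp
    fix i assume "i < length (take s v)"
    then show "take s v ! i = take s p ! i" using pre by simp
  qed
  have pd: "p = take s p @ [p!s] @ drop (Suc s) p" using id_take_nth_drop[of s p] s L by simp
  have vd: "v = take s v @ [v!s] @ drop (Suc s) v" using id_take_nth_drop[of s v] s by simp
  have dp: "drop (Suc s) p = replicate (length v - Suc s) (v!s)"
  proof (rule nth_equalityI)
    show "length (drop (Suc s) p) = length (replicate (length v - Suc s) (v!s))" using L by simp
    fix i assume i: "i < length (drop (Suc s) p)"
    have "p ! (Suc s + i) = v!s" using post[rule_format, of "Suc s + i"] i L by simp
    then show "drop (Suc s) p ! i = replicate (length v - Suc s) (v!s) ! i" using i L by simp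
  qed
  have dv: "drop (Suc s) v = replicate (length v - Suc s) (p!s)"
  proof (rule nth_equalityI)
    show "length (drop (Suc s) v) = length (replicate (length v - Suc s) (p!s))" by simp
    fix i assume i: "i < length (drop (Suc s) v)"
    have "v ! (Suc s + i) = p!s" using post[rule_format, of "Suc s + i"] i by simp
    then show "drop (Suc s) v ! i = replicate (length v - Suc s) (p!s) ! i" using i by simp
  qed
  show ?thesis
  proof (cases "Suc s = length v")
    case True
    have e1: "drop (Suc s) p = []" "drop (Suc s) v = []" using True L by simp_all
    have "p = take s p @ [p!s]" using pd unfolding e1 append.right_neutral .
    moreover have "v = take s p @ [v!s]" using vd unfolding e1 tk append.right_neutral .
    ultimately have "\<exists>q c e. p = q@[c] \<and> v = q@[e] \<and> c\<noteq>e"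
      using ne by (intro exI[of _ "take s p"] exI[of _ "p!s"] exI[of _ "v!s"]) simp
    then show ?thesis by (rule disjI1)
  next
    case False
    then have "length v - Suc s \<ge> 1" using s by simp
    moreover have "p = take s p @ [p!s] @ replicate (length v - Suc s) (v!s)" using pd unfolding dp .
    moreover have "v = take s p @ [v!s] @ replicate (length v - Suc s) (p!s)" using vd unfolding dv tk .
    ultimately have "\<exists>r c d m. m\<ge>1 \<and> c\<noteq>d \<and> p = r@[c]@replicate m d \<and> v = r@[d]@replicate m c"
      using ne by (intro exI[of _ "take s p"] exI[of _ "p!s"] exI[of _ "v!s"] exI[of _ "length v - Suc s"]) simp
    then show ?thesis by (rule disjI2)
  qed
qed

definition nonconst :: "nat list \<Rightarrow> bool" where
  "nonconst w \<longleftrightarrow> (\<exists>i. Suc i < length w \<and> w!i \<noteq> w!Suc i)"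

lemma nonconst_app: "nonconst u \<Longrightarrow> nonconst (u @ w)"
proof -
  assume "nonconst u"
  then obtain i where i: "Suc i < length u" "u!i \<noteq> u!Suc i" unfolding nonconst_def by blast
  have "(u@w)!i = u!i" "(u@w)!Suc i = u!Suc i" using i(1) by (simp_all add: nth_append)
  then show ?thesis unfolding nonconst_def using i by (intro exI[of _ i]) simp
qed

lemma nonconst_last2: "x \<noteq> y \<Longrightarrow> nonconst (u @ [x, y])"
proof -
  assume "x \<noteq> y"
  have "(u @ [x, y])!length u = x" "(u @ [x, y])!Suc (length u) = y" by (simp_all add: nth_append)
  then show ?thesis unfolding nonconst_def using \<open>x \<noteq> y\<close> by (intro exI[of _ "length u"]) simp
qed

lemma lidx_nonconst:
  assumes "nonconst v"
  shows "Suc (lidx v) < length v \<and> v ! lidx v \<noteq> v ! Suc (lidx v)"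
proof -
  from assms obtain i where "i + 1 < length v \<and> v!i \<noteq> v!(i+1)" unfolding nonconst_def by auto
  then have "(\<lambda>i. i + 1 < length v \<and> v ! i \<noteq> v ! (i + 1)) (lidx v)"
    unfolding lidx_def by (rule GreatestI_nat[where b="length v"]) auto
  then show ?thesis by simp
qed

lemma lidx_form:
  assumes "c \<noteq> d" "m \<ge> 1"
  shows "lidx (r@[d]@replicate m c) = length r"
  unfolding lidx_def
proof (rule Greatest_equality)
  show "length r + 1 < length (r @ [d] @ replicate m c) \<and>
    (r @ [d] @ replicate m c) ! length r \<noteq> (r @ [d] @ replicate m c) ! (length r + 1)"
    using assms by (auto simp: nth_append)
next
  fix y assume y: "y + 1 < length (r @ [d] @ replicate m c) \<and>
    (r @ [d] @ replicate m c) ! y \<noteq> (r @ [d] @ replicate m c) ! (y + 1)"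
  show "y \<le> length r"
  proof (rule ccontr)
    assume "\<not> y \<le> length r"
    then obtain z where z: "y = Suc (length r + z)" by (metis add_Suc_right le_add1 less_imp_Suc_add not_le)
    then show False using y by (auto simp: nth_append)
  qed
qed

lemma E3_mem:
  assumes "c \<noteq> d" "m \<ge> 1" "\<alpha> \<noteq> d" "\<alpha> \<in> {1..n}"
  shows "r@[c]@replicate m d@[\<alpha>,d] \<in> E3 n (r@[d]@replicate m c)"
proof -
  have l: "lidx (r@[d]@replicate m c) = length r" using lidx_form assms by blast
  have "(r@[d]@replicate m c) ! (length r + 1) = c" using assms(2) by (cases m) (auto simp: nth_append)
  then show ?thesis unfolding E3_def Let_def l using assms by auto
qed


definition domd :: "nat list set \<Rightarrow> nat list \<Rightarrow> bool" where
  "domd D x \<longleftrightarrow> x \<in> D \<or> (\<exists>u\<in>D. sierp_adj u x)"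

lemma domd_last: "q@[e] \<in> D \<Longrightarrow> domd D (q@[b])"
  unfolding domd_def using adj_last[of e b q] by (cases "b = e") auto

lemma domd_ext: "r@[d]@replicate m c \<in> D \<Longrightarrow> c \<noteq> d \<Longrightarrow> domd D (r@[c]@replicate m d)"
  unfolding domd_def using adj_ext[of d c r m] by auto

lemma E1_mem: "c \<in> {1..n} \<Longrightarrow> v@[c,c] \<in> E1 n v"
  unfolding E1_def by blast

lemma E2_mem: "c \<noteq> e \<Longrightarrow> a \<noteq> e \<Longrightarrow> c \<in> {1..n} \<Longrightarrow> a \<in> {1..n} \<Longrightarrow> q@[c,a,e] \<in> E2 n (q@[e])"
  unfolding E2_def by force

lemma rep2: "replicate m c @ [c,c] = replicate (m+2) c"
  by (induct m) auto

lemma ext_case: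
  assumes cd: "c \<noteq> d" and m: "m \<ge> 1" and c: "c \<in> {1..n}" and a: "a \<in> {1..n}" and b: "b \<in> {1..n}"
    and S1: "E1 n (r@[d]@replicate m c) \<subseteq> D" and S3: "E3 n (r@[d]@replicate m c) \<subseteq> D"
  shows "domd D (r@[c]@replicate m d@[a,b])"
proof (cases "a = d")
  case False
  have "r@[c]@replicate m d@[a,d] \<in> D" using E3_mem[OF cd m False a] S3 by blast
  then have "(r@[c]@replicate m d@[a])@[d] \<in> D" by simp
  from domd_last[OF this, of b] show ?thesis by simp
next
  case ad: True
  show ?thesis
  proof (cases "b = d")
    case True
    have "(r@[d]@replicate m c)@[c,c] \<in> D" using E1_mem[OF c] S1 by blast
    moreover have "(r@[d]@replicate m c)@[c,c] = r@[d]@replicate (m+2) c"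
      by (simp add: rep2)
    ultimately have "r@[d]@replicate (m+2) c \<in> D" by simp
    from domd_ext[OF this cd] show ?thesis using ad True by (simp add: rep2)
  next
    case False
    have "r@[c]@replicate m d@[b,d] \<in> D" using E3_mem[OF cd m False b] S3 by blast
    then have "(r@[c]@replicate m d)@[b]@replicate 1 d \<in> D" by simp
    from domd_ext[OF this] False show ?thesis using ad by simp
  qed
qed

lemma last_case:
  assumes ce: "c \<noteq> e" and c: "c \<in> {1..n}" and a: "a \<in> {1..n}" and b: "b \<in> {1..n}"
    and S1: "E1 n (q@[e]) \<subseteq> D" and S2: "E2 n (q@[e]) \<subseteq> D"
  shows "domd D (q@[c,a,b])"
proof (cases "a = e")
  case False
  have "q@[c,a,e] \<in> D" using E2_mem[OF ce False c a] S2 by blast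
  then have "(q@[c,a])@[e] \<in> D" by simp
  from domd_last[OF this, of b] show ?thesis by simp
next
  case ae: True
  show ?thesis
  proof (cases "b = e")
    case True
    have "(q@[e])@[c,c] \<in> D" using E1_mem[OF c] S1 by blast
    then have "q@[e]@replicate 2 c \<in> D" by (simp add: numeral_2_eq_2)
    from domd_ext[OF this ce] show ?thesis using ae True by (simp add: numeral_2_eq_2)
  next
    case False
    have "q@[c,b,e] \<in> D" using E2_mem[OF ce False c b] S2 by blast
    then have "(q@[c])@[b]@replicate 1 e \<in> D" by simp
    from domd_ext[OF this] False show ?thesis using ae by simp
  qed
qed


lemma D_nonone:
  "v \<in> Dset n (Suc k) \<Longrightarrow> v \<noteq> replicate (Suc k) 1 \<Longrightarrow>
   E1 n v \<union> E2 n v \<union> E3 n v \<subseteq> Dset n (Suc (Suc (Suc k)))"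
  unfolding Dset.simps(4) Let_def by auto

lemma D_one:
  "even k \<Longrightarrow> E1 n (replicate (Suc k) 1) \<union> E2 n (replicate (Suc k) 1) \<subseteq> Dset n (Suc (Suc (Suc k)))"
  unfolding Dset.simps(4) Let_def by auto

lemma D_one_a1:
  "odd k \<Longrightarrow> a \<in> {1..n} \<Longrightarrow> replicate (Suc k) 1 @ [a,1] \<in> Dset n (Suc (Suc (Suc k)))"
  unfolding Dset.simps(4) Let_def by auto

lemma D_cases:
  assumes "w \<in> Dset n (Suc (Suc (Suc k)))"
  shows "(even k \<and> w \<in> E1 n (replicate (Suc k) 1) \<union> E2 n (replicate (Suc k) 1)) \<or>
         (odd k \<and> (\<exists>a\<in>{1..n}. w = replicate (Suc k) 1 @ [a,1])) \<or>
         (\<exists>v \<in> Dset n (Suc k). v \<noteq> replicate (Suc k) 1 \<and> w \<in> E1 n v \<union> E2 n v \<union> E3 n v)"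
  using assms unfolding Dset.simps(4) Let_def by (auto split: if_splits)

lemma D_even_a1:
  assumes "even t" "t \<ge> 2" "a \<in> {1..n}"
  shows "replicate (t-2) 1 @ [a,1] \<in> Dset n t"
proof -
  obtain j where t: "t = Suc (Suc j)" using assms(2) by (metis add_2_eq_Suc le_Suc_ex)
  show ?thesis
  proof (cases j)
    case 0 then show ?thesis using t assms by simp
  next
    case (Suc k)
    then have "odd k" using assms(1) t by simp
    from D_one_a1[OF this assms(3)] show ?thesis using t Suc by simp
  qed
qed

lemma E1_inv:
  assumes v: "v \<in> sierp_vertices n t" and t: "t \<ge> 1" and vc: "v = replicate t 1 \<or> nonconst v"
    and w: "w \<in> E1 n v"
  shows "w \<in> sierp_vertices n (Suc (Suc t)) \<and> (w = replicate (Suc (Suc t)) 1 \<or> nonconst w)"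
proof -
  from w obtain a where wa: "w = v@[a,a]" and a: "a \<in> {1..n}" unfolding E1_def by blast
  have "w \<in> sierp_vertices n (Suc (Suc t))" using v a wa unfolding sierp_vertices_def by auto
  moreover have "w = replicate (Suc (Suc t)) 1 \<or> nonconst w"
  proof (cases "nonconst v")
    case True then show ?thesis using wa nonconst_app by blast
  next
    case False
    then have vr: "v = replicate t 1" using vc by blast
    show ?thesis
    proof (cases "a = 1")
      case True
      have "w = replicate (t+2) 1" unfolding wa vr True by (rule rep2)
      then show ?thesis by (metis add_2_eq_Suc')
    next
      case False
      obtain t' where t': "t = Suc t'" using t by (metis Suc_le_D One_nat_def)
      have "v = replicate t' 1 @ [1]" using vr t' by (simp add: replicate_append_same)
      then have "w = (replicate t' 1 @ [1, a]) @ [a]" using wa by simp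
      then show ?thesis using nonconst_app nonconst_last2 False by metis
    qed
  qed
  ultimately show ?thesis by blast
qed

lemma E2_inv:
  assumes v: "v \<in> sierp_vertices n t" and t: "t \<ge> 1" and w: "w \<in> E2 n v"
  shows "w \<in> sierp_vertices n (Suc (Suc t)) \<and> nonconst w"
proof -
  from w obtain a b where wa: "w = butlast v @ [a,b,last v]" and a: "a \<in> {1..n} - {last v}"
    and b: "b \<in> {1..n} - {last v}" unfolding E2_def by blast
  have ne: "v \<noteq> []" using v t unfolding sierp_vertices_def by auto
  have "set (butlast v) \<subseteq> set v" by (meson in_set_butlastD subsetI)
  moreover have "last v \<in> set v" using ne by simp
  moreover have "last v \<in> {1..n}" using \<open>last v \<in> set v\<close> v unfolding sierp_vertices_def by blast
  ultimately have "w \<in> sierp_vertices n (Suc (Suc t))" using v a b wa ne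
    unfolding sierp_vertices_def by auto
  moreover have "nonconst w"
  proof (cases "a = b")
    case True
    then have "w = (butlast v @ [a]) @ [b, last v]" using wa by simp
    then show ?thesis using nonconst_last2 b by (metis DiffD2 singletonI)
  next
    case False
    then have "w = (butlast v @ [a, b]) @ [last v]" using wa by simp
    then show ?thesis using nonconst_last2 nonconst_app False by metis
  qed
  ultimately show ?thesis by blast
qed

lemma E3_inv:
  assumes v: "v \<in> sierp_vertices n t" and vc: "nonconst v" and w: "w \<in> E3 n v"
  shows "w \<in> sierp_vertices n (Suc (Suc t)) \<and> nonconst w"
proof -
  define l where "l = lidx v"
  have l: "Suc l < length v" using lidx_nonconst[OF vc] l_def by simp
  from w obtain a where wa: "w = take l v @ [v ! (l + 1)] @ replicate (length v - l - 1) (v ! l) @ [a, v ! l]"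
    and a: "a \<in> {1..n} - {v ! l}" unfolding E3_def Let_def l_def by blast
  have s0: "v ! (l+1) \<in> set v" "v ! l \<in> set v" using l by simp_all
  have s1: "v ! (l+1) \<in> {1..n}" "v ! l \<in> {1..n}" using s0 v unfolding sierp_vertices_def by blast+
  have "set (take l v) \<subseteq> set v" by (rule set_take_subset)
  then have "w \<in> sierp_vertices n (Suc (Suc t))" using v a wa s1 l
    unfolding sierp_vertices_def by auto
  moreover have "nonconst w"
  proof -
    have "w = (take l v @ [v ! (l + 1)] @ replicate (length v - l - 1) (v ! l)) @ [a, v ! l]" using wa by simp
    then show ?thesis using nonconst_last2 a by (metis DiffD2 singletonI)
  qed
  ultimately show ?thesis by blast
qed

lemma Dset_inv:
  assumes n: "n \<ge> 1" and w: "w \<in> Dset n t"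
  shows "w \<in> sierp_vertices n t \<and> (w = replicate t 1 \<or> nonconst w)"
  using w
proof (induction t arbitrary: w rule: less_induct)
  case (less t)
  show ?case
  proof (cases t)
    case 0 then show ?thesis using less.prems by simp
  next
    case (Suc t1)
    show ?thesis
    proof (cases t1)
      case 0 then show ?thesis using less.prems Suc n unfolding sierp_vertices_def by auto
    next
      case (Suc t2)
      note t1 = Suc
      show ?thesis
      proof (cases t2)
        case 0
        with less.prems \<open>t = Suc t1\<close> t1 obtain a where wa: "w = [a,1]" "a \<in> {1..n}" by auto
        have "w \<in> sierp_vertices n t" using wa n \<open>t = Suc t1\<close> t1 0 unfolding sierp_vertices_def by auto
        moreover have "w = replicate t 1 \<or> nonconst w"
        proof (cases "a = 1")
          case True then show ?thesis using wa \<open>t = Suc t1\<close> t1 0 by (simp add: numeral_2_eq_2)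
        next
          case False then show ?thesis using wa nonconst_last2[of a 1 "[]"] by simp
        qed
        ultimately show ?thesis by blast
      next
        case (Suc k)
        have tt: "t = Suc (Suc (Suc k))" using \<open>t = Suc t1\<close> t1 Suc by simp
        have IH: "v \<in> sierp_vertices n (Suc k) \<and> (v = replicate (Suc k) 1 \<or> nonconst v)"
          if "v \<in> Dset n (Suc k)" for v
        proof -
          have "Suc k < t" using tt by simp
          from less.IH[OF this that] show ?thesis .
        qed
        have onev: "replicate (Suc k) 1 \<in> sierp_vertices n (Suc k)" using n unfolding sierp_vertices_def by auto
        from D_cases[of w n k] less.prems tt consider
          (A) "w \<in> E1 n (replicate (Suc k) 1)" | (B) "w \<in> E2 n (replicate (Suc k) 1)"
          | (C) a where "a \<in> {1..n}" "w = replicate (Suc k) 1 @ [a,1]"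
          | (D) v where "v \<in> Dset n (Suc k)" "v \<noteq> replicate (Suc k) 1" "w \<in> E1 n v \<union> E2 n v \<union> E3 n v"
          by blast
        then show ?thesis
        proof cases
          case A then show ?thesis using E1_inv[OF onev _ _ A] tt by simp
        next
          case B then show ?thesis using E2_inv[OF onev _ B] tt by simp
        next
          case C
          have "w \<in> sierp_vertices n t" using C n tt unfolding sierp_vertices_def by auto
          moreover have "w = replicate t 1 \<or> nonconst w"
          proof (cases "a = 1")
            case True
            have "w = replicate (Suc k+2) 1" unfolding C(2) True by (rule rep2)
            then show ?thesis using tt by (metis add_2_eq_Suc')
          next
            case False then show ?thesis using C nonconst_last2 by blast
          qed
          ultimately show ?thesis by blast
        next
          case D
          have vv: "v \<in> sierp_vertices n (Suc k)" and vn: "nonconst v" using IH[OF D(1)] D(2) by auto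
          from D(3) show ?thesis
            using E1_inv[OF vv _ _, of w] E2_inv[OF vv _, of w] E3_inv[OF vv vn, of w] vn tt by auto
        qed
      qed
    qed
  qed
qed


lemma vert_set: "v \<in> sierp_vertices n t \<Longrightarrow> x \<in> set v \<Longrightarrow> x \<in> {1..n}"
  unfolding sierp_vertices_def by blast

lemma split2: "length x = Suc (Suc j) \<Longrightarrow> \<exists>p a b. x = p@[a,b] \<and> length p = j"
proof -
  assume l: "length x = Suc (Suc j)"
  then have "x \<noteq> []" by auto
  then obtain p' b where x: "x = p'@[b]" by (metis rev_exhaust)
  then have "p' \<noteq> []" using l by auto
  then obtain p a where "p' = p@[a]" by (metis rev_exhaust)
  then show ?thesis using x l by auto
qed

lemma step:
  assumes n: "n \<ge> 1" and p: "p \<in> sierp_vertices n (Suc k)" and a: "a \<in> {1..n}" and b: "b \<in> {1..n}"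
    and dp: "domd (Dset n (Suc k)) p"
  shows "domd (Dset n (Suc (Suc (Suc k)))) (p@[a,b])"
proof -
  let ?D' = "Dset n (Suc k)" and ?D = "Dset n (Suc (Suc (Suc k)))" and ?one = "replicate (Suc k) (1::nat)"
  have Dinv: "v \<in> sierp_vertices n (Suc k) \<and> (v = ?one \<or> nonconst v)" if "v \<in> ?D'" for v
    using Dset_inv[OF n that] .
  from dp consider (isin) "p \<in> ?D'" | (adj) u where "u \<in> ?D'" "sierp_adj u p" unfolding domd_def by blast
  then show ?thesis
  proof cases
    case isin
    show ?thesis
    proof (cases "p \<noteq> ?one \<or> even k")
      case True
      then have "E1 n p \<subseteq> ?D" using D_nonone[OF isin] D_one[of k n] by blast
      then have "(p@[a])@[a] \<in> ?D" using E1_mem[OF a, of p] by auto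
      from domd_last[OF this, of b] show ?thesis by simp
    next
      case False
      then have "(?one@[a])@[1] \<in> ?D" using D_one_a1[OF _ a, of k] by simp
      from domd_last[OF this, of b] False show ?thesis by simp
    qed
  next
    case adj
    from adj_cases[OF adj(2)] show ?thesis
    proof (elim disjE exE conjE)
      fix q c e assume pq: "p = q@[c]" and uq: "u = q@[e]" and ce: "c \<noteq> e"
      have c: "c \<in> {1..n}" using vert_set[OF p] pq by simp
      show ?thesis
      proof (cases "u = ?one \<and> odd k")
        case True
        then obtain k' where k: "k = Suc k'" by (metis odd_pos gr0_conv_Suc)
        have r2: "replicate (Suc (Suc k')) (1::nat) = (replicate k' 1 @ [1]) @ [1]" by (induct k') auto
        have "q@[e] = (replicate k' 1 @ [1]) @ [1]" using uq True k r2 by simp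
        then have q1: "q = replicate k' 1 @ [1]" and e1: "e = 1" by simp_all
        have ev: "even (Suc k)" using True by simp
        have "replicate (Suc k - 2) 1 @ [c,1] \<in> ?D'" using D_even_a1[OF ev _ c] k by simp
        then have v'D: "replicate k' 1 @ [c] @ replicate 1 1 \<in> ?D'" using k by simp
        have c1: "c \<noteq> 1" using ce e1 by simp
        have "replicate k' 1 @ [c] @ replicate 1 1 \<noteq> ?one" using c1 k
          by (metis in_set_replicate in_set_conv_decomp append_Cons)
        then have S: "E1 n (replicate k' 1 @ [c] @ replicate 1 1) \<subseteq> ?D"
             "E3 n (replicate k' 1 @ [c] @ replicate 1 1) \<subseteq> ?D"
          using D_nonone[OF v'D] by auto
        have one: "(1::nat) \<in> {1..n}" using n by simp
        have "domd ?D (replicate k' 1 @ [1] @ replicate 1 c @ [a, b])"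
          using ext_case[OF c1[symmetric] _ one a b S] by simp
        then show ?thesis using pq q1 by simp
      next
        case False
        then have "E1 n u \<subseteq> ?D" "E2 n u \<subseteq> ?D" using D_nonone[OF adj(1)] D_one[of k n] by blast+
        then have "domd ?D (q@[c,a,b])" using last_case[OF ce c a b] uq by simp
        then show ?thesis using pq by simp
      qed
    next
      fix r c d m assume m: "m \<ge> 1" and cd: "c \<noteq> d" and pr: "p = r@[c]@replicate m d"
        and ur: "u = r@[d]@replicate m c"
      have c: "c \<in> {1..n}" using vert_set[OF p] pr by simp
      have "c \<in> set u" "d \<in> set u" using ur m by auto
      then have "u \<noteq> ?one" using cd by (metis in_set_replicate)
      then have S: "E1 n u \<subseteq> ?D" "E3 n u \<subseteq> ?D" using D_nonone[OF adj(1)] by auto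
      have "domd ?D (r@[c]@replicate m d@[a,b])" using ext_case[OF cd m c a b] S ur by simp
      then show ?thesis using pr by simp
    qed
  qed
qed

lemma dom_all:
  assumes n: "n \<ge> 1"
  shows "t \<ge> 1 \<Longrightarrow> x \<in> sierp_vertices n t \<Longrightarrow> domd (Dset n t) x"
proof (induction t arbitrary: x rule: less_induct)
  case (less t)
  then have lx: "length x = t" and sx: "set x \<subseteq> {1..n}" unfolding sierp_vertices_def by auto
  show ?case
  proof (cases t)
    case 0 then show ?thesis using less.prems by simp
  next
    case (Suc t1)
    show ?thesis
    proof (cases t1)
      case 0
      then obtain a where "x = []@[a]" using lx Suc by (cases x) auto
      moreover have "[]@[1] \<in> Dset n t" using Suc 0 by simp
      ultimately show ?thesis using domd_last by metis
    next
      case (Suc t2)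
      note t1 = Suc
      show ?thesis
      proof (cases t2)
        case 0
        obtain p a b where x: "x = p@[a,b]" and lp: "length p = 0" using split2[of x 0] lx \<open>t = Suc t1\<close> t1 0 by auto
        have "a \<in> {1..n}" using sx x by auto
        then have "[a]@[1] \<in> Dset n t" using \<open>t = Suc t1\<close> t1 0 by simp
        from domd_last[OF this, of b] show ?thesis using x lp by simp
      next
        case (Suc k)
        have tt: "t = Suc (Suc (Suc k))" using \<open>t = Suc t1\<close> t1 Suc by simp
        obtain p a b where x: "x = p@[a,b]" and lp: "length p = Suc k" using split2[of x "Suc k"] lx tt by auto
        have a: "a \<in> {1..n}" and b: "b \<in> {1..n}" using sx x by auto
        have pv: "p \<in> sierp_vertices n (Suc k)" using sx x lp unfolding sierp_vertices_def by auto
        have "domd (Dset n (Suc k)) p" using less.IH[of "Suc k" p] pv tt by simp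
        from step[OF n pv a b this] show ?thesis using x tt by simp
      qed
    qed
  qed
qed

theorem theorem2p6:
  fixes n t :: nat
  assumes "n \<ge> 2" and "t \<ge> 1"
  shows "sierp_dominating n t (Dset n t)"
proof -
  have n: "n \<ge> 1" using assms(1) by simp
  have "Dset n t \<subseteq> sierp_vertices n t" using Dset_inv[OF n] by blast
  moreover have "\<forall>v \<in> sierp_vertices n t. v \<in> Dset n t \<or> (\<exists>u \<in> Dset n t. sierp_adj u v)"
    using dom_all[OF n assms(2)] unfolding domd_def by blast
  ultimately show ?thesis unfolding sierp_dominating_def by blast
qed

end
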